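(* Let $m\geq 1$ be an integer, $\omega\in[-1,1]$, and $$W_{m,\omega}(x)=m-1-\frac{m}{1-x}+\frac{1-\omega x}{(1-x)^{m+1}(1-2\omega x+x^2)}\qquad(0\le x<1).$$ Then for all real $x,y\geq 0$ with $x+y<1$, $$W_{m,\omega}(x)+W_{m,\omega}(y)\leq W_{m,\omega}(x+y).$$ *)

theory Defs
  imports Complex_Main
begin

definition W :: "nat \<Rightarrow> real \<Rightarrow> real \<Rightarrow> real" where
  "W m \<omega> x = real m - 1 - real m / (1 - x)
     + (1 - \<omega> * x) / ((1 - x) ^ (m + 1) * (1 - 2 * \<omega> * x + x ^ 2))"

end

theory Submission
  imports Defs
begin

definition MM :: "(real \<Rightarrow> real) \<Rightarrow> bool" where
 "MM f \<longleftrightarrow> (\<forall>x y. 0 \<le> x \<longrightarrow> 0 \<le> y \<longrightarrow> x + y < 1 \<longrightarrow> f x + f y \<le> f (x+y) + f 0)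
   \<and> (\<forall>a b. 0 \<le> a \<longrightarrow> a \<le> b \<longrightarrow> b < 1 \<longrightarrow> f a \<le> f b) \<and> 0 \<le> f 0"

lemma MM_S: "MM f \<Longrightarrow> 0 \<le> x \<Longrightarrow> 0 \<le> y \<Longrightarrow> x + y < 1 \<Longrightarrow> f x + f y \<le> f (x+y) + f 0"
  unfolding MM_def by blast

lemma MM_mono: "MM f \<Longrightarrow> 0 \<le> a \<Longrightarrow> a \<le> b \<Longrightarrow> b < 1 \<Longrightarrow> f a \<le> f b"
  unfolding MM_def by blast

lemma MM_0: "MM f \<Longrightarrow> 0 \<le> f 0"
  unfolding MM_def by blast

lemma MM_nonneg: "MM f \<Longrightarrow> 0 \<le> x \<Longrightarrow> x < 1 \<Longrightarrow> 0 \<le> f x"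
  using MM_mono[of f 0 x] MM_0[of f] by linarith

lemma MM_I:
  assumes "\<And>x y. 0 \<le> x \<Longrightarrow> 0 \<le> y \<Longrightarrow> x + y < 1 \<Longrightarrow> f x + f y \<le> f (x+y) + f 0"
    and "\<And>a b. 0 \<le> a \<Longrightarrow> a \<le> b \<Longrightarrow> b < 1 \<Longrightarrow> f a \<le> f b" and "0 \<le> f 0"
  shows "MM f"
  using assms unfolding MM_def by blast

lemma MM_add: "MM f \<Longrightarrow> MM g \<Longrightarrow> MM (\<lambda>x. f x + g x)"
  unfolding MM_def by (smt (verit))

lemma MM_const: "0 \<le> c \<Longrightarrow> MM (\<lambda>x. c)"
  unfolding MM_def by simp

lemma MM_minus: "MM f \<Longrightarrow> c \<le> f 0 \<Longrightarrow> MM (\<lambda>x. f x - c)"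
  unfolding MM_def by (smt (verit))

lemma MM_mult:
  assumes f: "MM f" and g: "MM g"
  shows "MM (\<lambda>x. f x * g x)"
proof (rule MM_I)
  fix x y :: real assume x: "0 \<le> x" and y: "0 \<le> y" and xy: "x + y < 1"
  have f1: "f x - f 0 \<le> f (x+y) - f y" using MM_S[OF f x y xy] by linarith
  have g1: "g x - g 0 \<le> g (x+y) - g y" using MM_S[OF g x y xy] by linarith
  have x1: "x < 1" and y1: "y < 1" using x y xy by linarith+
  have f2: "0 \<le> f x - f 0" using MM_mono[OF f _ x] x x1 by simp
  have g2: "0 \<le> g x - g 0" using MM_mono[OF g _ x] x x1 by simp
  have g3: "g x \<le> g (x+y)" using MM_mono[OF g x _ xy] y by simp
  have g4: "0 \<le> g x" using MM_nonneg[OF g x] x1 by simp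
  have f3: "f 0 \<le> f y" using MM_mono[OF f _ y] y1 by simp
  have f4: "0 \<le> f 0" using MM_0[OF f] .
  have "(f x - f 0) * g x \<le> (f (x+y) - f y) * g (x+y)"
    by (rule mult_mono[OF f1 g3]) (use f1 f2 g4 in linarith)+
  moreover have "f 0 * (g x - g 0) \<le> f y * (g (x+y) - g y)"
    by (rule mult_mono[OF f3 g1]) (use f3 f4 g1 g2 in linarith)+
  ultimately show "f x * g x + f y * g y \<le> f (x + y) * g (x + y) + f 0 * g 0"
    by (simp add: algebra_simps)
next
  fix a b :: real assume "0 \<le> a" "a \<le> b" "b < 1"
  then show "f a * g a \<le> f b * g b"
    using MM_mono[OF f] MM_mono[OF g] MM_nonneg[OF f] MM_nonneg[OF g]
    by (intro mult_mono) auto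
next
  show "0 \<le> f 0 * g 0" using MM_0[OF f] MM_0[OF g] by simp
qed

lemma MM_pow: "MM f \<Longrightarrow> MM (\<lambda>x. f x ^ k)"
proof (induction k)
  case 0 then show ?case by (simp add: MM_const)
next
  case (Suc k) then show ?case using MM_mult[of f "\<lambda>x. f x ^ k"] by simp
qed

lemma MM_A: "MM (\<lambda>x. 1 / (1 - x))"
proof (rule MM_I)
  fix x y :: real assume x: "0 \<le> x" and y: "0 \<le> y" and xy: "x + y < 1"
  have "1/(1-x) + 1/(1-y) - 1/(1-(x+y)) - 1 = - (x*y*(2-x-y)/((1-x)*(1-y)*(1-(x+y))))"
  proof -
    have n: "1-x \<noteq> 0" "1-y \<noteq> 0" "1-(x+y) \<noteq> 0" using x y xy by auto
    show ?thesis using n by (simp add: divide_simps) (simp add: algebra_simps)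
  qed
  moreover have "0 \<le> x*y*(2-x-y)/((1-x)*(1-y)*(1-(x+y)))"
    using x y xy by (intro divide_nonneg_nonneg mult_nonneg_nonneg) auto
  ultimately show "1 / (1 - x) + 1 / (1 - y) \<le> 1 / (1 - (x + y)) + 1 / (1 - 0)"
    by simp
next
  fix a b :: real assume "0 \<le> a" "a \<le> b" "b < 1"
  then show "1 / (1 - a) \<le> 1 / (1 - b)" by (intro divide_left_mono) auto
qed simp



lemma cm_bound:
  assumes "cmod c \<le> 1" "0 \<le> t" "t < 1"
  shows "1 - t \<le> cmod (1 - c * of_real t)"
proof -
  have "cmod (c * of_real t) \<le> t" using assms
    by (simp add: norm_mult) (metis mult_left_le_one_le abs_of_nonneg norm_ge_zero mult.commute)
  moreover have "cmod 1 - cmod (c * of_real t) \<le> cmod (1 - c * of_real t)"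
    by (rule norm_triangle_ineq2)
  ultimately show ?thesis by simp
qed

lemma inv_bound:
  assumes "cmod c \<le> 1" "0 \<le> t" "t < 1" "0 \<le> r" "r < 1"
  shows "cmod (1 / ((1 - c * of_real t) * (1 - c * of_real r))) \<le> 1 / ((1 - t) * (1 - r))"
proof -
  have a: "1 - t \<le> cmod (1 - c * of_real t)" "1 - r \<le> cmod (1 - c * of_real r)"
    using cm_bound assms by auto
  have "(1 - t) * (1 - r) \<le> cmod (1 - c * of_real t) * cmod (1 - c * of_real r)"
    using a assms by (intro mult_mono) auto
  moreover have "0 < (1 - t) * (1 - r)" using assms by simp
  ultimately show ?thesis
    by (simp add: norm_divide norm_mult) (simp add: divide_simps)
qed

lemma aux: "0 \<le> (p::real) \<Longrightarrow> p \<le> 1 \<Longrightarrow> 0 \<le> q \<Longrightarrow> 0 \<le> r \<Longrightarrow> r \<le> R \<Longrightarrow> p*q*r \<le> 1*q*R"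
  by (intro mult_mono mult_right_mono) auto

lemma B_S:
  assumes c: "cmod c \<le> 1" and x: "0 \<le> x" and y: "0 \<le> y" and xy: "x + y < 1"
  shows "Re (c/(1-c*of_real (x+y)) + c - c/(1-c*of_real x) - c/(1-c*of_real y))
     \<le> 1/(1-(x+y)) + 1 - 1/(1-x) - 1/(1-y)"
proof -
  define s where "s = x + y"
  have s: "0 \<le> s" "s < 1" using x y xy by (auto simp: s_def)
  have nz: "1 - c * of_real t \<noteq> 0" if "0 \<le> t" "t < 1" for t
    using cm_bound[OF c that] that by auto
  have nzx: "1 - c * of_real x \<noteq> 0" and nzy: "1 - c * of_real y \<noteq> 0" and nzs: "1 - c * of_real s \<noteq> 0"
    using nz x y s xy by auto
  have id: "c/(1-c*of_real s) + c - c/(1-c*of_real x) - c/(1-c*of_real y)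
     = (c^3 * of_real (x*y) * (1/((1-c*of_real y)*(1-c*of_real s)) + 1/((1-c*of_real x)*(1-c*of_real s))))"
    using nzx nzy nzs unfolding s_def by (simp add: divide_simps) (simp add: algebra_simps power2_eq_square power3_eq_cube)
  have idr: "1/(1-s) + 1 - 1/(1-x) - 1/(1-y) = x*y*(1/((1-y)*(1-s)) + 1/((1-x)*(1-s)))"
    using x y s xy unfolding s_def by (simp add: divide_simps) (simp add: algebra_simps)
  let ?w = "c^3 * of_real (x*y) * (1/((1-c*of_real y)*(1-c*of_real s)) + 1/((1-c*of_real x)*(1-c*of_real s)))"
  have "Re ?w \<le> cmod ?w" by (rule complex_Re_le_cmod)
  also have "cmod ?w \<le> 1 * (x*y) * (1/((1-y)*(1-s)) + 1/((1-x)*(1-s)))"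
  proof -
    have h1: "cmod (c^3) \<le> 1" using c by (simp add: norm_power power_le_one)
    moreover have h2: "cmod (1/((1-c*of_real y)*(1-c*of_real s)) + 1/((1-c*of_real x)*(1-c*of_real s)))
        \<le> 1/((1-y)*(1-s)) + 1/((1-x)*(1-s))"
      using inv_bound[OF c y _ s] inv_bound[OF c x _ s] x y xy
      by (intro order.trans[OF norm_triangle_ineq] add_mono) auto
    moreover have heq: "cmod ?w = cmod (c^3) * (x*y) * cmod (1/((1-c*of_real y)*(1-c*of_real s)) + 1/((1-c*of_real x)*(1-c*of_real s)))"
      using x y by (simp only: norm_mult norm_of_real abs_of_nonneg mult_nonneg_nonneg)
    ultimately show ?thesis using x y
      unfolding heq by (intro aux) auto
  qed
  finally show ?thesis using id idr unfolding s_def by simp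
qed

lemma B_mono:
  assumes c: "cmod c \<le> 1" and a: "0 \<le> a" and ab: "a \<le> b" and b: "b < 1"
  shows "Re (c/(1-c*of_real b) - c/(1-c*of_real a)) \<le> 1/(1-b) - 1/(1-a)"
proof -
  have nz: "1 - c * of_real t \<noteq> 0" if "0 \<le> t" "t < 1" for t
    using cm_bound[OF c that] that by auto
  have nza: "1 - c * of_real a \<noteq> 0" and nzb: "1 - c * of_real b \<noteq> 0"
    using nz a ab b by auto
  have id: "c/(1-c*of_real b) - c/(1-c*of_real a) = c^2 * of_real (b - a) * (1/((1-c*of_real a)*(1-c*of_real b)))"
    using nza nzb by (simp add: divide_simps) (simp add: algebra_simps power2_eq_square)
  have idr: "1/(1-b) - 1/(1-a) = (b-a) * (1/((1-a)*(1-b)))"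
    using a ab b by (simp add: divide_simps)
  let ?w = "c^2 * of_real (b - a) * (1/((1-c*of_real a)*(1-c*of_real b)))"
  have "Re ?w \<le> cmod ?w" by (rule complex_Re_le_cmod)
  also have "cmod ?w \<le> 1 * (b - a) * (1/((1-a)*(1-b)))"
  proof -
    have h1: "cmod (c^2) \<le> 1" using c by (simp add: norm_power power_le_one)
    moreover have h2: "cmod (1/((1-c*of_real a)*(1-c*of_real b))) \<le> 1/((1-a)*(1-b))"
      using inv_bound[OF c a _ _ b] a ab b by auto
    moreover have heq: "cmod ?w = cmod (c^2) * (b - a) * cmod (1/((1-c*of_real a)*(1-c*of_real b)))"
      using ab by (simp only: norm_mult norm_of_real abs_of_nonneg diff_ge_0_iff_ge)
    ultimately show ?thesis using ab
      unfolding heq by (intro aux) auto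
  qed
  finally show ?thesis using id idr by simp
qed


lemma MM_cong: "MM f \<Longrightarrow> (\<And>x. 0 \<le> x \<Longrightarrow> x < 1 \<Longrightarrow> f x = g x) \<Longrightarrow> MM g"
  unfolding MM_def
  by (smt (verit, ccfv_threshold))

lemma lin_aux: "(f::real) + g - d - e \<le> a + 1 - b - c \<Longrightarrow> b - d + (c - e) \<le> a - f + (1 - g)"
  by linarith

definition RR :: "real \<Rightarrow> real \<Rightarrow> real" where
  "RR \<omega> x = (1 + x) / ((1 - x) * (1 - 2 * \<omega> * x + x ^ 2))"

lemma Q_pos: "-1 \<le> \<omega> \<Longrightarrow> \<omega> \<le> 1 \<Longrightarrow> 0 \<le> x \<Longrightarrow> x < 1 \<Longrightarrow> 0 < 1 - 2 * \<omega> * x + (x::real) ^ 2"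
proof -
  assume a: "-1 \<le> \<omega>" "\<omega> \<le> 1" "0 \<le> x" "x < 1"
  have "1 - 2 * \<omega> * x + x ^ 2 = (1 - x)^2 + 2 * (1 - \<omega>) * x" by (simp add: algebra_simps power2_eq_square)
  moreover have "0 < (1 - x)^2" using a by simp
  moreover have "0 \<le> 2 * (1 - \<omega>) * x" using a by simp
  ultimately show ?thesis by linarith
qed

lemma RR_repr:
  assumes w: "-1 \<le> \<omega>" "\<omega> < 1" and t: "0 \<le> t" "t < 1" and sq: "b^2 = 1 - \<omega>^2"
  shows "RR \<omega> t = (1/(1-t) - Re (Complex \<omega> b/(1 - Complex \<omega> b * of_real t))) / (1 - \<omega>)"
proof -
  have Q: "0 < 1 - 2 * \<omega> * t + t ^ 2" using Q_pos w t by simp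
  have "Re (Complex \<omega> b/(1 - Complex \<omega> b * of_real t)) = (\<omega> * (1 - \<omega> * t) - b^2 * t) / ((1 - \<omega> * t)^2 + (b^2 * t^2))"
    by (simp add: Re_divide power_mult_distrib algebra_simps power2_eq_square)
  also have "\<dots> = (\<omega> - t) / (1 - 2 * \<omega> * t + t ^ 2)"
    unfolding sq by (simp add: algebra_simps power2_eq_square)
  finally have re: "Re (Complex \<omega> b/(1 - Complex \<omega> b * of_real t)) = (\<omega> - t) / (1 - 2 * \<omega> * t + t ^ 2)" .
  show ?thesis unfolding re RR_def using Q w t
    by (simp add: divide_simps) (simp add: algebra_simps power2_eq_square)
qed

lemma MM_RR:
  assumes w: "-1 \<le> \<omega>" "\<omega> \<le> 1"
  shows "MM (RR \<omega>)"
proof (cases "\<omega> = 1")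
  case True
  have "MM (\<lambda>x. (1 + x) * (1 / (1 - x)) ^ 3)"
  proof (rule MM_mult[OF _ MM_pow[OF MM_A]])
    show "MM (\<lambda>x. 1 + x)" by (rule MM_I) auto
  qed
  then show ?thesis
    by (rule MM_cong) (simp add: RR_def True power2_eq_square power3_eq_cube field_simps)
next
  case False
  then have w1: "\<omega> < 1" using w by simp
  define b where "b = sqrt (1 - \<omega>^2)"
  define z where "z = Complex \<omega> b"
  have sq: "(sqrt (1 - \<omega>^2))^2 = 1 - \<omega>^2"
    using w by (intro real_sqrt_pow2) (simp add: abs_le_square_iff power2_eq_square, smt (verit) mult_le_one mult_minus_left mult_minus_right minus_mult_minus)
  have cz: "cmod z \<le> 1" unfolding z_def cmod_def using sq by (simp add: b_def)
  define B where "B t = Re (z/(1 - z * of_real t))" for t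
  have rep: "RR \<omega> t = (1/(1-t) - B t) / (1 - \<omega>)" if "0 \<le> t" "t < 1" for t
    using RR_repr[OF w(1) w1 that, of b] sq unfolding z_def B_def b_def by simp
  have d: "0 < 1 - \<omega>" using w1 by simp
  show ?thesis
  proof (rule MM_I)
    fix x y :: real assume x: "0 \<le> x" and y: "0 \<le> y" and xy: "x + y < 1"
    have "B (x+y) + B 0 - B x - B y \<le> 1/(1-(x+y)) + 1 - 1/(1-x) - 1/(1-y)"
      using B_S[OF cz x y xy] unfolding B_def by simp
    then have "(1/(1-x) - B x) + (1/(1-y) - B y) \<le> (1/(1-(x+y)) - B (x+y)) + (1 - B 0)"
      by (rule lin_aux)
    then have "(1/(1-x) - B x) / (1 - \<omega>) + (1/(1-y) - B y) / (1 - \<omega>)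
       \<le> (1/(1-(x+y)) - B (x+y)) / (1 - \<omega>) + (1 - B 0) / (1 - \<omega>)"
      using d by (simp add: add_divide_distrib[symmetric] divide_right_mono)
    then show "RR \<omega> x + RR \<omega> y \<le> RR \<omega> (x + y) + RR \<omega> 0"
      using rep x y xy by simp
  next
    fix a c :: real assume a: "0 \<le> a" and ab: "a \<le> c" and b: "c < 1"
    have "B c - B a \<le> 1/(1-c) - 1/(1-a)"
      using B_mono[OF cz a ab b] unfolding B_def by simp
    then have "(1/(1-a) - B a) / (1 - \<omega>) \<le> (1/(1-c) - B c) / (1 - \<omega>)"
      using d by (intro divide_right_mono) auto
    then show "RR \<omega> a \<le> RR \<omega> c" using rep a ab b by simp
  next
    show "0 \<le> RR \<omega> 0" by (simp add: RR_def)
  qed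
qed

definition uu :: "real \<Rightarrow> real" where "uu x = 1 / (1 - x)"
definition gg :: "nat \<Rightarrow> real \<Rightarrow> real" where "gg k x = uu x ^ k - 1 - real k * (uu x - 1)"

lemma MM_uu_pow1: "MM (\<lambda>x. uu x ^ k - 1)"
  unfolding uu_def by (rule MM_minus[OF MM_pow[OF MM_A]]) simp

lemma MM_h: "MM (\<lambda>x. uu x - 1)"
  using MM_uu_pow1[of 1] by simp

lemma MM_gg: "MM (gg k)"
proof (induction k)
  case 0 then show ?case using MM_const[of 0] by (simp add: gg_def)
next
  case (Suc k)
  have "MM (\<lambda>x. gg k x + (uu x - 1) * (uu x ^ k - 1))"
    by (rule MM_add[OF Suc MM_mult[OF MM_h MM_uu_pow1]])
  moreover have "(\<lambda>x. gg k x + (uu x - 1) * (uu x ^ k - 1)) = gg (Suc k)"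
    by (rule ext) (simp add: gg_def algebra_simps)
  ultimately show ?case by simp
qed

theorem mainTheorem9:
  fixes m :: nat and \<omega> x y :: real
  assumes "m \<ge> 1" and "-1 \<le> \<omega>" and "\<omega> \<le> 1"
    and "x \<ge> 0" and "y \<ge> 0" and "x + y < 1"
  shows "W m \<omega> x + W m \<omega> y \<le> W m \<omega> (x + y)"
proof -
  obtain n where m: "m = Suc n" using assms(1) by (cases m) auto
  define V where "V t = 1/2 * (gg (n+2) t + gg n t + uu t ^ n * (RR \<omega> t - 1))" for t
  have MR: "MM (\<lambda>t. RR \<omega> t - 1)"
    by (rule MM_minus[OF MM_RR[OF assms(2,3)]]) (simp add: RR_def)
  have MV: "MM V" unfolding V_def
    by (intro MM_mult[OF MM_const] MM_add MM_gg MM_mult[OF MM_pow MR]) (auto simp: uu_def intro: MM_A)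
  have V0: "V 0 = 0" by (simp add: V_def gg_def uu_def RR_def)
  have WV: "W m \<omega> t = V t" if t: "0 \<le> t" "t < 1" for t
  proof -
    have Q: "0 < 1 - 2 * \<omega> * t + t ^ 2" using Q_pos assms(2,3) t by simp
    have p: "0 < (1 - t) ^ n" using t by simp
    have e1: "uu t ^ (n+2) = 1 / ((1-t)^n * ((1-t)*(1-t)))" by (simp add: uu_def power_one_over power_add power2_eq_square)
    have e2: "uu t ^ n = 1 / (1-t)^n" by (simp add: uu_def power_one_over)
    have e3: "(1 - t) ^ (m + 1) = (1-t)^n * ((1-t)*(1-t))" by (simp add: m power_add power2_eq_square)
    show ?thesis
      unfolding W_def V_def gg_def e1 e2 e3 RR_def using Q p t
      by (simp add: uu_def m divide_simps) (simp add: algebra_simps power2_eq_square)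
  qed
  have "V x + V y \<le> V (x + y) + V 0" by (rule MM_S[OF MV assms(4,5,6)])
  moreover have "W m \<omega> x = V x" "W m \<omega> y = V y" "W m \<omega> (x+y) = V (x+y)"
    using WV assms(4,5,6) by auto
  ultimately show ?thesis using V0 by simp
qed

end
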